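(* Let $N\ge3$, $h=1/N$, $\rho_j=jh$, $I_j=[\rho_{j-1},\rho_j]$ ($j=1,\dots,N$, with $\rho_0\equiv\rho_N$ on $\mathbb{T}=\mathbb{R}/\mathbb{Z}$), and let $\mathbb{K}^h$ be the space of continuous periodic functions on $\mathbb{T}$ that are linear on each $I_j$. Let $(\boldsymbol{X}^h(\cdot,t),V^h(\cdot,t),\kappa^h(\cdot,t))\in[\mathbb{K}^h]^2\times\mathbb{K}^h\times\mathbb{K}^h$, $t\ge0$ (differentiable in $t$, with all segment lengths $|\boldsymbol{h}_j(t)|>0$), be a solution of: for all $t\ge0$, $$\big(\boldsymbol{n}^h\cdot\partial_t\boldsymbol{X}^h,\phi^h\big)^h_{\Gamma^h(t)}=\big(V^h,\phi^h\big)^h_{\Gamma^h(t)}\quad\forall\phi^h\in\mathbb{K}^h,$$ $$\big(V^h\boldsymbol{n}^h,\boldsymbol{\omega}^h\big)^h_{\Gamma^h(t)}=\Big(-\partial_s\kappa^h\,\boldsymbol{n}^h+\tfrac12(\kappa^h)^2\partial_s\boldsymbol{X}^h,\,\partial_s\boldsymbol{\omega}^h\Big)^h_{\Gamma^h(t)}\quad\forall\boldsymbol{\omega}^h\in[\mathbb{K}^h]^2,$$ $$\big(\partial_t\kappa^h,\psi^h\big)^h_{\Gamma^h(t)}=\big(\boldsymbol{n}^h\cdot\partial_s(\partial_t\boldsymbol{X}^h),\partial_s\psi^h\big)^h_{\Gamma^h(t)}-\big((\partial_s\boldsymbol{X}^h\cdot\partial_s(\partial_t\boldsymbol{X}^h))\,\kappa^h,\psi^h\big)^h_{\Gamma^h(t)}\quad\forall\psi^h\in\mathbb{K}^h,$$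 with initial data $\boldsymbol{X}^h(\cdot,0)=\boldsymbol{X}^h_0$, $\kappa^h(\cdot,0)=\kappa^h_0$. Then the discrete Willmore energy $$W^h(t):=\tfrac12\big((\kappa^h(\cdot,t))^2,1\big)^h_{\Gamma^h(t)}=\tfrac14\sum_{j=1}^N|\boldsymbol{h}_j(t)|\Big[(\kappa^h(\rho_{j-1},t))^2+(\kappa^h(\rho_j,t))^2\Big]$$ satisfies $W^h(t)\le W^h(t')\le W^h(0)$ for all $t\ge t'\ge0$, where $W^h(0)=\tfrac14\sum_{j=1}^N|\boldsymbol{h}_{0,j}|\big[(\kappa^h_0(\rho_{j-1}))^2+(\kappa^h_0(\rho_j))^2\big]$ with $\boldsymbol{h}_{0,j}=\boldsymbol{X}^h_0(\rho_j)-\boldsymbol{X}^h_0(\rho_{j-1})$.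
   Context: For $\boldsymbol{X}^h\in[\mathbb{K}^h]^2$, the polygon $\Gamma^h=\boldsymbol{X}^h(\mathbb{T})$ has edges $\boldsymbol{h}_j=\boldsymbol{X}^h(\rho_j)-\boldsymbol{X}^h(\rho_{j-1})$. For $u^h\in\mathbb{K}^h$ (or $[\mathbb{K}^h]^2$), the discrete arc-length derivative is the piecewise constant $\partial_s u^h|_{I_j}=\frac{u^h(\rho_j)-u^h(\rho_{j-1})}{|\boldsymbol{h}_j|}$. Discrete tangent and normal: $\boldsymbol{\tau}^h|_{I_j}=\partial_s\boldsymbol{X}^h|_{I_j}=\boldsymbol{h}_j/|\boldsymbol{h}_j|$, $\boldsymbol{n}^h|_{I_j}=-\boldsymbol{h}_j^\perp/|\boldsymbol{h}_j|$ with $(u_1,u_2)^\perp=(-u_2,u_1)$. Mass-lumped inner product for piecewise continuous (scalar or vector) $u,v$: $(u,v)^h_{\Gamma^h}=\frac12\sum_{j=1}^N|\boldsymbol{h}_j|\big[(u\cdot v)(\rho_{j-1}^+)+(u\cdot v)(\rho_j^-)\big]$, where one-sided limits are taken within $I_j$. *)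

theory Defs
  imports "HOL-Analysis.Analysis"
begin

text \<open>Elements of K^h are represented by their nodal values u :: nat => _,
  where node rho_j (j = 0..N-1) carries u j and node rho_N is identified with rho_0
  (we write u (j mod N) for the value at rho_j, j = 1..N).\<close>

definition perp :: "real^2 \<Rightarrow> real^2" where
  "perp u = (\<chi> i. if i = 1 then - (u $ 2) else u $ 1)"

definition edge :: "nat \<Rightarrow> (nat \<Rightarrow> real^2) \<Rightarrow> nat \<Rightarrow> real^2" where
  "edge N X j = X (j mod N) - X (j - 1)"

definition ds :: "nat \<Rightarrow> (nat \<Rightarrow> real^2) \<Rightarrow> (nat \<Rightarrow> 'a::real_vector) \<Rightarrow> nat \<Rightarrow> 'a" where
  "ds N X u j = (1 / norm (edge N X j)) *\<^sub>R (u (j mod N) - u (j - 1))"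

definition tang :: "nat \<Rightarrow> (nat \<Rightarrow> real^2) \<Rightarrow> nat \<Rightarrow> real^2" where
  "tang N X j = ds N X X j"

definition nrm :: "nat \<Rightarrow> (nat \<Rightarrow> real^2) \<Rightarrow> nat \<Rightarrow> real^2" where
  "nrm N X j = - ((1 / norm (edge N X j)) *\<^sub>R perp (edge N X j))"

text \<open>Mass-lumped inner product: L j = (u.v)(rho_{j-1}^+), R j = (u.v)(rho_j^-), taken within I_j.\<close>
definition lumped :: "nat \<Rightarrow> (nat \<Rightarrow> real^2) \<Rightarrow> (nat \<Rightarrow> real) \<Rightarrow> (nat \<Rightarrow> real) \<Rightarrow> real" where
  "lumped N X L R = (1/2) * (\<Sum>j=1..N. norm (edge N X j) * (L j + R j))"

definition willmore :: "nat \<Rightarrow> (nat \<Rightarrow> real^2) \<Rightarrow> (nat \<Rightarrow> real) \<Rightarrow> real" where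
  "willmore N X k = (1/2) * lumped N X (\<lambda>j. (k (j - 1))\<^sup>2) (\<lambda>j. (k (j mod N))\<^sup>2)"

end

theory Submission
  imports Defs
begin

lemma norm_deriv:
  fixes Y :: "real \<Rightarrow> real^2"
  assumes "(Y has_vector_derivative D) (at t within S)" "Y t \<noteq> 0"
  shows "((\<lambda>s. norm (Y s)) has_real_derivative (sgn (Y t) \<bullet> D)) (at t within S)"
proof -
  have "((\<lambda>s. norm (Y s)) has_derivative (\<lambda>h. sgn (Y t) \<bullet> (h *\<^sub>R D))) (at t within S)"
    using has_derivative_compose[OF assms(1)[unfolded has_vector_derivative_def] has_derivative_norm[OF assms(2)]]
    by (simp add: inner_commute)
  then show ?thesis unfolding has_field_derivative_def
    by (rule has_derivative_eq_rhs) (auto simp: fun_eq_iff inner_scaleR_right inner_commute)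
qed

lemma lumped_lin:
  assumes "\<And>j. L1 j + R1 j = a * (L2 j + R2 j) + b * (L3 j + R3 j)"
  shows "lumped N X L1 R1 = a * lumped N X L2 R2 + b * lumped N X L3 R3"
  unfolding lumped_def using assms
  by (simp add: sum_distrib_left sum.distrib[symmetric] algebra_simps)

lemma lumped_nonneg:
  assumes "\<And>j. L j \<ge> 0" "\<And>j. R j \<ge> 0"
  shows "lumped N X L R \<ge> 0"
  unfolding lumped_def using assms by (auto intro!: sum_nonneg)

theorem theorem3p1:
  fixes N :: nat
    and X Xt :: "real \<Rightarrow> nat \<Rightarrow> real^2"
    and V \<kappa> \<kappa>t :: "real \<Rightarrow> nat \<Rightarrow> real"
    and X0 :: "nat \<Rightarrow> real^2" and \<kappa>0 :: "nat \<Rightarrow> real"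
  assumes N3: "N \<ge> 3"
    and dX: "\<And>t j. t \<ge> 0 \<Longrightarrow> ((\<lambda>s. X s j) has_vector_derivative Xt t j) (at t within {0..})"
    and d\<kappa>: "\<And>t j. t \<ge> 0 \<Longrightarrow> ((\<lambda>s. \<kappa> s j) has_real_derivative \<kappa>t t j) (at t within {0..})"
    and pos: "\<And>t j. t \<ge> 0 \<Longrightarrow> j \<in> {1..N} \<Longrightarrow> norm (edge N (X t) j) > 0"
    and eq1: "\<And>t \<phi>. t \<ge> 0 \<Longrightarrow>
      lumped N (X t)
        (\<lambda>j. (nrm N (X t) j \<bullet> Xt t (j - 1)) * \<phi> (j - 1))
        (\<lambda>j. (nrm N (X t) j \<bullet> Xt t (j mod N)) * \<phi> (j mod N))
      = lumped N (X t)
        (\<lambda>j. V t (j - 1) * \<phi> (j - 1))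
        (\<lambda>j. V t (j mod N) * \<phi> (j mod N))"
    and eq2: "\<And>t \<omega>. t \<ge> 0 \<Longrightarrow>
      lumped N (X t)
        (\<lambda>j. V t (j - 1) * (nrm N (X t) j \<bullet> \<omega> (j - 1)))
        (\<lambda>j. V t (j mod N) * (nrm N (X t) j \<bullet> \<omega> (j mod N)))
      = lumped N (X t)
        (\<lambda>j. (- (ds N (X t) (\<kappa> t) j *\<^sub>R nrm N (X t) j)
               + ((1/2) * (\<kappa> t (j - 1))\<^sup>2) *\<^sub>R ds N (X t) (X t) j) \<bullet> ds N (X t) \<omega> j)
        (\<lambda>j. (- (ds N (X t) (\<kappa> t) j *\<^sub>R nrm N (X t) j)
               + ((1/2) * (\<kappa> t (j mod N))\<^sup>2) *\<^sub>R ds N (X t) (X t) j) \<bullet> ds N (X t) \<omega> j)"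
    and eq3: "\<And>t \<psi>. t \<ge> 0 \<Longrightarrow>
      lumped N (X t)
        (\<lambda>j. \<kappa>t t (j - 1) * \<psi> (j - 1))
        (\<lambda>j. \<kappa>t t (j mod N) * \<psi> (j mod N))
      = lumped N (X t)
          (\<lambda>j. (nrm N (X t) j \<bullet> ds N (X t) (Xt t) j) * ds N (X t) \<psi> j)
          (\<lambda>j. (nrm N (X t) j \<bullet> ds N (X t) (Xt t) j) * ds N (X t) \<psi> j)
        - lumped N (X t)
          (\<lambda>j. (ds N (X t) (X t) j \<bullet> ds N (X t) (Xt t) j) * \<kappa> t (j - 1) * \<psi> (j - 1))
          (\<lambda>j. (ds N (X t) (X t) j \<bullet> ds N (X t) (Xt t) j) * \<kappa> t (j mod N) * \<psi> (j mod N))"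
    and init: "X 0 = X0" "\<kappa> 0 = \<kappa>0"
  shows "\<forall>t t'. 0 \<le> t' \<and> t' \<le> t \<longrightarrow>
           willmore N (X t) (\<kappa> t) \<le> willmore N (X t') (\<kappa> t')
         \<and> willmore N (X t') (\<kappa> t') \<le>
             (1/4) * (\<Sum>j=1..N. norm (X0 (j mod N) - X0 (j - 1)) * ((\<kappa>0 (j - 1))\<^sup>2 + (\<kappa>0 (j mod N))\<^sup>2))"
proof -
  have Nge: "N > 0" using N3 by simp
  have deriv: "((\<lambda>s. willmore N (X s) (\<kappa> s)) has_real_derivative
      (- lumped N (X t) (\<lambda>j. V t (j - 1) * V t (j - 1)) (\<lambda>j. V t (j mod N) * V t (j mod N))))
      (at t within {0..})" if t0: "t \<ge> 0" for t
  proof -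
    define len where "len j = norm (edge N (X t) j)" for j
    define D where "D j = sgn (edge N (X t) j) \<bullet> (Xt t (j mod N) - Xt t (j - 1))" for j
    have trm: "((\<lambda>s. norm (edge N (X s) j) * ((\<kappa> s (j - 1))\<^sup>2 + (\<kappa> s (j mod N))\<^sup>2))
        has_real_derivative
        (D j * ((\<kappa> t (j - 1))\<^sup>2 + (\<kappa> t (j mod N))\<^sup>2)
         + len j * (2 * \<kappa> t (j - 1) * \<kappa>t t (j - 1) + 2 * \<kappa> t (j mod N) * \<kappa>t t (j mod N))))
        (at t within {0..})" if j: "j \<in> {1..N}" for j
    proof -
      have e: "((\<lambda>s. edge N (X s) j) has_vector_derivative (Xt t (j mod N) - Xt t (j - 1))) (at t within {0..})"
        unfolding edge_def using dX[OF t0] by (intro has_vector_derivative_diff)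
      have n: "((\<lambda>s. norm (edge N (X s) j)) has_real_derivative D j) (at t within {0..})"
        unfolding D_def by (rule norm_deriv[OF e]) (use pos[OF t0 j] in auto)
      have k1: "((\<lambda>s. (\<kappa> s (j - 1))\<^sup>2) has_real_derivative 2 * \<kappa> t (j - 1) * \<kappa>t t (j - 1)) (at t within {0..})"
        using DERIV_power[OF d\<kappa>[OF t0, of "j - 1"], of 2] by (simp add: ac_simps)
      have k2: "((\<lambda>s. (\<kappa> s (j mod N))\<^sup>2) has_real_derivative 2 * \<kappa> t (j mod N) * \<kappa>t t (j mod N)) (at t within {0..})"
        using DERIV_power[OF d\<kappa>[OF t0, of "j mod N"], of 2] by (simp add: ac_simps)
      show ?thesis using DERIV_mult[OF n DERIV_add[OF k1 k2]] by (simp add: len_def algebra_simps)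
    qed
    have W: "willmore N (X s) (\<kappa> s) = (1/4) * (\<Sum>j=1..N. norm (edge N (X s) j) * ((\<kappa> s (j - 1))\<^sup>2 + (\<kappa> s (j mod N))\<^sup>2))" for s
      unfolding willmore_def lumped_def by simp
    have d1: "((\<lambda>s. willmore N (X s) (\<kappa> s)) has_real_derivative
       (1/4) * (\<Sum>j=1..N. D j * ((\<kappa> t (j - 1))\<^sup>2 + (\<kappa> t (j mod N))\<^sup>2)
         + len j * (2 * \<kappa> t (j - 1) * \<kappa>t t (j - 1) + 2 * \<kappa> t (j mod N) * \<kappa>t t (j mod N))))
       (at t within {0..})"
      unfolding W by (intro DERIV_cmult DERIV_sum trm) auto
    define A where "A = lumped N (X t)
          (\<lambda>j. (nrm N (X t) j \<bullet> ds N (X t) (Xt t) j) * ds N (X t) (\<kappa> t) j)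
          (\<lambda>j. (nrm N (X t) j \<bullet> ds N (X t) (Xt t) j) * ds N (X t) (\<kappa> t) j)"
    define C where "C = lumped N (X t)
          (\<lambda>j. (ds N (X t) (X t) j \<bullet> ds N (X t) (Xt t) j) * \<kappa> t (j - 1) * \<kappa> t (j - 1))
          (\<lambda>j. (ds N (X t) (X t) j \<bullet> ds N (X t) (Xt t) j) * \<kappa> t (j mod N) * \<kappa> t (j mod N))"
    define K where "K = lumped N (X t)
        (\<lambda>j. \<kappa>t t (j - 1) * \<kappa> t (j - 1))
        (\<lambda>j. \<kappa>t t (j mod N) * \<kappa> t (j mod N))"
    have e3: "K = A - C" unfolding K_def A_def C_def by (rule eq3[OF t0])
    have Dj: "D j = len j * (ds N (X t) (X t) j \<bullet> ds N (X t) (Xt t) j)" if j: "j \<in> {1..N}" for j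
    proof -
      have "len j > 0" unfolding len_def using pos[OF t0 j] .
      have a: "ds N (X t) (X t) j = (1/len j) *\<^sub>R edge N (X t) j"
        by (simp add: ds_def len_def edge_def)
      have b: "ds N (X t) (Xt t) j = (1/len j) *\<^sub>R (Xt t (j mod N) - Xt t (j - 1))"
        by (simp add: ds_def len_def)
      show ?thesis using \<open>len j > 0\<close> unfolding a b D_def sgn_div_norm len_def[symmetric]
        by (simp add: inner_scaleR_left inner_scaleR_right inner_diff_right field_simps)
    qed
    have dval: "(1/4) * (\<Sum>j=1..N. D j * ((\<kappa> t (j - 1))\<^sup>2 + (\<kappa> t (j mod N))\<^sup>2)
         + len j * (2 * \<kappa> t (j - 1) * \<kappa>t t (j - 1) + 2 * \<kappa> t (j mod N) * \<kappa>t t (j mod N)))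
       = K + (1/2) * C"
      unfolding K_def C_def lumped_def
      apply (simp add: sum_distrib_left sum.distrib[symmetric])
      apply (rule sum.cong[OF refl])
      apply (simp add: Dj len_def power2_eq_square field_simps)
      done
    define E where "E = lumped N (X t)
        (\<lambda>j. V t (j - 1) * (nrm N (X t) j \<bullet> Xt t (j - 1)))
        (\<lambda>j. V t (j mod N) * (nrm N (X t) j \<bullet> Xt t (j mod N)))"
    have e2: "E = (-1) * A + (1/2) * C"
      unfolding E_def eq2[OF t0] A_def C_def
      by (rule lumped_lin) (simp add: inner_add_left inner_minus_left power2_eq_square algebra_simps)
    have e1: "E = lumped N (X t) (\<lambda>j. V t (j - 1) * V t (j - 1)) (\<lambda>j. V t (j mod N) * V t (j mod N))"
    proof -
      have "E = 1 * lumped N (X t)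
        (\<lambda>j. (nrm N (X t) j \<bullet> Xt t (j - 1)) * V t (j - 1))
        (\<lambda>j. (nrm N (X t) j \<bullet> Xt t (j mod N)) * V t (j mod N)) + 0 * E"
        unfolding E_def by (rule lumped_lin) simp
      then show ?thesis using eq1[OF t0, of "V t"] by simp
    qed
    have "K + (1/2) * C = - lumped N (X t) (\<lambda>j. V t (j - 1) * V t (j - 1)) (\<lambda>j. V t (j mod N) * V t (j mod N))"
      using e1 e2 e3 by simp
    then show ?thesis using d1 unfolding dval by simp
  qed
  have Wdec: "willmore N (X t) (\<kappa> t) \<le> willmore N (X t') (\<kappa> t')" if "0 \<le> t'" "t' \<le> t" for t t'
  proof (cases "t' = t")
    case False
    then have lt: "t' < t" using that by simp
    let ?W = "\<lambda>s. willmore N (X s) (\<kappa> s)"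
    have cont: "continuous_on {t'..t} ?W"
    proof (rule continuous_on_subset[of "{0..}"])
      show "continuous_on {0..} ?W"
        unfolding continuous_on_eq_continuous_within
        using deriv by (auto intro: DERIV_continuous)
    qed (use that in auto)
    have dif: "?W differentiable (at x)" if "t' < x" "x < t" for x
    proof -
      have x0: "x \<in> interior {0::real..}" using that \<open>0 \<le> t'\<close> by simp
      show ?thesis using deriv[of x] x0 unfolding at_within_interior[OF x0]
        by (meson interior_subset real_differentiable_def subsetD atLeast_iff)
    qed
    obtain l z where z: "t' < z" "z < t" "DERIV ?W z :> l" "?W t - ?W t' = (t - t') * l"
      using MVT[OF lt cont dif] by blast
    have z0: "z \<in> interior {0::real..}" using z \<open>0 \<le> t'\<close> by simp
    have "DERIV ?W z :> (- lumped N (X z) (\<lambda>j. V z (j - 1) * V z (j - 1)) (\<lambda>j. V z (j mod N) * V z (j mod N)))"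
      using deriv[of z] z0 unfolding at_within_interior[OF z0] by (meson interior_subset subsetD atLeast_iff)
    then have "l = - lumped N (X z) (\<lambda>j. V z (j - 1) * V z (j - 1)) (\<lambda>j. V z (j mod N) * V z (j mod N))"
      using z(3) DERIV_unique by blast
    moreover have "lumped N (X z) (\<lambda>j. V z (j - 1) * V z (j - 1)) (\<lambda>j. V z (j mod N) * V z (j mod N)) \<ge> 0"
      by (rule lumped_nonneg) auto
    ultimately have "l \<le> 0" by simp
    moreover have "(t - t') * l \<le> 0" using \<open>l \<le> 0\<close> lt by (simp add: mult_nonneg_nonpos)
    ultimately show ?thesis using z(4) by linarith
  qed simp
  have W0: "willmore N (X 0) (\<kappa> 0) =
     (1/4) * (\<Sum>j=1..N. norm (X0 (j mod N) - X0 (j - 1)) * ((\<kappa>0 (j - 1))\<^sup>2 + (\<kappa>0 (j mod N))\<^sup>2))"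
    unfolding willmore_def lumped_def edge_def init by simp
  show ?thesis using Wdec W0 by (metis order.refl order_trans)
qed

end
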